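(* Let $R$ be an integral domain. If $R/(u)$ is a coherent ring for every nonzero nonunit $u\in R$, then $R$ is coherent.
   Context: A commutative ring is coherent if every finitely generated ideal is finitely presented. *)

theory Defs
  imports "HOL-Algebra.QuotRing"
begin

definition syzygy :: "('a, 'b) ring_scheme \<Rightarrow> nat \<Rightarrow> (nat \<Rightarrow> 'a) \<Rightarrow> (nat \<Rightarrow> 'a) \<Rightarrow> bool" where
  "syzygy R n a r \<longleftrightarrow>
     (\<forall>i<n. r i \<in> carrier R) \<and> (\<forall>i\<ge>n. r i = \<zero>\<^bsub>R\<^esub>) \<and>
     (\<Oplus>\<^bsub>R\<^esub>i\<in>{..<n}. r i \<otimes>\<^bsub>R\<^esub> a i) = \<zero>\<^bsub>R\<^esub>"

text \<open>An ideal I is finitely presented: there is a surjection R^n \<rightarrow> I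
  (given by generators a 0..a (n-1)) whose kernel (the syzygy module) is
  finitely generated, i.e. there is an exact sequence R^m \<rightarrow> R^n \<rightarrow> I \<rightarrow> 0.\<close>
definition finitely_presented_ideal :: "('a, 'b) ring_scheme \<Rightarrow> 'a set \<Rightarrow> bool" where
  "finitely_presented_ideal R I \<longleftrightarrow>
     (\<exists>(n::nat) a. (\<forall>i<n. a i \<in> carrier R) \<and> I = Idl\<^bsub>R\<^esub> (a ` {..<n}) \<and>
        (\<exists>(m::nat) s. (\<forall>j<m. syzygy R n a (s j)) \<and>
           (\<forall>r. syzygy R n a r \<longrightarrow>
              (\<exists>c. (\<forall>j<m. c j \<in> carrier R) \<and>
                   (\<forall>i<n. r i = (\<Oplus>\<^bsub>R\<^esub>j\<in>{..<m}. c j \<otimes>\<^bsub>R\<^esub> s j i))))))"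

definition finitely_generated_ideal :: "('a, 'b) ring_scheme \<Rightarrow> 'a set \<Rightarrow> bool" where
  "finitely_generated_ideal R I \<longleftrightarrow>
     (\<exists>S. finite S \<and> S \<subseteq> carrier R \<and> I = Idl\<^bsub>R\<^esub> S)"

definition coherent_ring :: "('a, 'b) ring_scheme \<Rightarrow> bool" where
  "coherent_ring R \<longleftrightarrow> cring R \<and>
     (\<forall>I. ideal I R \<and> finitely_generated_ideal R I \<longrightarrow> finitely_presented_ideal R I)"

end

theory Submission
  imports Defs
begin

context cring begin

lemma fs_lessThan_Suc:
  assumes "\<And>i. i < Suc n \<Longrightarrow> f i \<in> carrier R"
  shows "(\<Oplus>i\<in>{..<Suc n}. f i) = f n \<oplus> (\<Oplus>i\<in>{..<n}. f i)"
  using assms by (simp add: lessThan_Suc finsum_insert Pi_def)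

lemma fs_shift:
  assumes "\<And>i. i < Suc n \<Longrightarrow> f i \<in> carrier R"
  shows "(\<Oplus>i\<in>{..<Suc n}. f i) = f 0 \<oplus> (\<Oplus>i\<in>{..<n}. f (Suc i))"
  using assms
proof (induction n)
  case 0 then show ?case by (simp add: lessThan_Suc finsum_insert)
next
  case (Suc n)
  have "(\<Oplus>i\<in>{..<Suc (Suc n)}. f i) = f (Suc n) \<oplus> (\<Oplus>i\<in>{..<Suc n}. f i)"
    using Suc.prems by (intro fs_lessThan_Suc) auto
  also have "\<dots> = f (Suc n) \<oplus> (f 0 \<oplus> (\<Oplus>i\<in>{..<n}. f (Suc i)))"
    using Suc by simp
  also have "\<dots> = f 0 \<oplus> (f (Suc n) \<oplus> (\<Oplus>i\<in>{..<n}. f (Suc i)))"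
    using Suc.prems by (simp add: a_lcomm Pi_def finsum_closed)
  also have "f (Suc n) \<oplus> (\<Oplus>i\<in>{..<n}. f (Suc i)) = (\<Oplus>i\<in>{..<Suc n}. f (Suc i))"
    using Suc.prems by (intro fs_lessThan_Suc[symmetric]) auto
  finally show ?case .
qed

lemma fs_split_add:
  fixes m n :: nat
  assumes "\<And>i. i < m + n \<Longrightarrow> f i \<in> carrier R"
  shows "(\<Oplus>i\<in>{..<m+n}. f i) = (\<Oplus>i\<in>{..<m}. f i) \<oplus> (\<Oplus>i\<in>{..<n}. f (m+i))"
  using assms
proof (induction n)
  case 0 then show ?case by (simp add: Pi_def finsum_closed)
next
  case (Suc n)
  have "(\<Oplus>i\<in>{..<m + Suc n}. f i) = f (m+n) \<oplus> (\<Oplus>i\<in>{..<m+n}. f i)"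
    using Suc.prems fs_lessThan_Suc[of "m+n" f] by simp
  also have "\<dots> = f (m+n) \<oplus> ((\<Oplus>i\<in>{..<m}. f i) \<oplus> (\<Oplus>i\<in>{..<n}. f (m+i)))"
    using Suc by simp
  also have "\<dots> = (\<Oplus>i\<in>{..<m}. f i) \<oplus> (f (m+n) \<oplus> (\<Oplus>i\<in>{..<n}. f (m+i)))"
    using Suc.prems by (simp add: a_lcomm Pi_def finsum_closed)
  also have "f (m+n) \<oplus> (\<Oplus>i\<in>{..<n}. f (m+i)) = (\<Oplus>i\<in>{..<Suc n}. f (m+i))"
    using Suc.prems by (intro fs_lessThan_Suc[symmetric]) auto
  finally show ?case .
qed

lemma fs_swap:
  fixes m n :: nat
  assumes "\<And>i k. i < n \<Longrightarrow> k < m \<Longrightarrow> f i k \<in> carrier R"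
  shows "(\<Oplus>i\<in>{..<n}. \<Oplus>k\<in>{..<m}. f i k) = (\<Oplus>k\<in>{..<m}. \<Oplus>i\<in>{..<n}. f i k)"
  using assms
proof (induction n)
  case 0 then show ?case by (simp add: finsum_zero)
next
  case (Suc n)
  have "(\<Oplus>i\<in>{..<Suc n}. \<Oplus>k\<in>{..<m}. f i k) = (\<Oplus>k\<in>{..<m}. f n k) \<oplus> (\<Oplus>i\<in>{..<n}. \<Oplus>k\<in>{..<m}. f i k)"
    using Suc.prems by (intro fs_lessThan_Suc) (auto intro: finsum_closed)
  also have "\<dots> = (\<Oplus>k\<in>{..<m}. f n k) \<oplus> (\<Oplus>k\<in>{..<m}. \<Oplus>i\<in>{..<n}. f i k)"
    using Suc by simp
  also have "\<dots> = (\<Oplus>k\<in>{..<m}. f n k \<oplus> (\<Oplus>i\<in>{..<n}. f i k))"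
    using Suc.prems by (intro finsum_addf[symmetric]) (auto intro!: finsum_closed)
  also have "\<dots> = (\<Oplus>k\<in>{..<m}. \<Oplus>i\<in>{..<Suc n}. f i k)"
  proof (intro finsum_cong' refl)
    fix k assume "k \<in> {..<m}"
    then show "f n k \<oplus> (\<Oplus>i\<in>{..<n}. f i k) = (\<Oplus>i\<in>{..<Suc n}. f i k)"
      using Suc.prems by (intro fs_lessThan_Suc[symmetric]) auto
  qed (use Suc.prems in \<open>auto intro!: finsum_closed\<close>)
  finally show ?case .
qed

lemma fs_neg:
  fixes n :: nat
  assumes "\<And>i. i < n \<Longrightarrow> f i \<in> carrier R"
  shows "\<ominus> (\<Oplus>i\<in>{..<n}. f i) = (\<Oplus>i\<in>{..<n}. \<ominus> f i)"
  using assms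
proof (induction n)
  case 0 then show ?case by simp
next
  case (Suc n)
  then show ?case
    by (simp add: fs_lessThan_Suc minus_add finsum_closed Pi_def)
qed

lemma fs_diff:
  fixes n :: nat
  assumes "\<And>i. i < n \<Longrightarrow> f i \<in> carrier R" "\<And>i. i < n \<Longrightarrow> g i \<in> carrier R"
  shows "(\<Oplus>i\<in>{..<n}. f i) \<ominus> (\<Oplus>i\<in>{..<n}. g i) = (\<Oplus>i\<in>{..<n}. f i \<ominus> g i)"
  using assms by (simp add: minus_eq fs_neg finsum_addf Pi_def)

lemma fs_mult_l:
  fixes n :: nat
  assumes "\<And>i. i < n \<Longrightarrow> f i \<in> carrier R" "x \<in> carrier R"
  shows "x \<otimes> (\<Oplus>i\<in>{..<n}. f i) = (\<Oplus>i\<in>{..<n}. x \<otimes> f i)"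
  using assms finsum_rdistr[of "{..<n}" x f] by (simp add: Pi_def)

lemma fs_mult_r:
  fixes n :: nat
  assumes "\<And>i. i < n \<Longrightarrow> f i \<in> carrier R" "x \<in> carrier R"
  shows "(\<Oplus>i\<in>{..<n}. f i) \<otimes> x = (\<Oplus>i\<in>{..<n}. f i \<otimes> x)"
  using assms finsum_ldistr[of "{..<n}" x f] by (simp add: Pi_def)

lemma fs_cong:
  fixes n :: nat
  assumes "\<And>i. i < n \<Longrightarrow> f i = g i" "\<And>i. i < n \<Longrightarrow> g i \<in> carrier R"
  shows "(\<Oplus>i\<in>{..<n}. f i) = (\<Oplus>i\<in>{..<n}. g i)"
  using assms by (intro finsum_cong) (auto simp: Pi_def)

lemma fs_closed:
  fixes n :: nat
  assumes "\<And>i. i < n \<Longrightarrow> f i \<in> carrier R"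
  shows "(\<Oplus>i\<in>{..<n}. f i) \<in> carrier R"
  using assms by (intro finsum_closed) (auto simp: Pi_def)

lemma fs_in_ideal:
  fixes n :: nat
  assumes "ideal J R" "\<And>i. i < n \<Longrightarrow> f i \<in> J"
  shows "(\<Oplus>i\<in>{..<n}. f i) \<in> J"
  using assms(2)
proof (induction n)
  case 0 then show ?case using assms(1) by (simp add: additive_subgroup.zero_closed ideal.axioms(1))
next
  case (Suc n)
  have c: "\<And>i. i < Suc n \<Longrightarrow> f i \<in> carrier R" using Suc.prems ideal.Icarr[OF assms(1)] by blast
  show ?case using Suc c
    by (simp add: fs_lessThan_Suc ideal.I_l_closed additive_subgroup.a_closed ideal.axioms(1)[OF assms(1)])
qed

end

context cring begin

definition LCS :: "nat \<Rightarrow> (nat \<Rightarrow> 'a) \<Rightarrow> 'a set" where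
  "LCS n a = {x. \<exists>r. (\<forall>i<n. r i \<in> carrier R) \<and> x = (\<Oplus>i\<in>{..<n}. r i \<otimes> a i)}"

lemma LCS_ideal:
  assumes a: "\<forall>i<n. a i \<in> carrier R"
  shows "ideal (LCS n a) R"
proof (rule idealI[OF ring_axioms])
  show "subgroup (LCS n a) (add_monoid R)"
  proof (rule add.subgroupI)
    show "LCS n a \<subseteq> carrier R"
      using a by (auto simp: LCS_def intro!: fs_closed)
    have "(\<Oplus>i\<in>{..<n}. \<zero> \<otimes> a i) = (\<Oplus>i\<in>{..<n}. \<zero>)"
      using a by (intro fs_cong) auto
    then have "\<zero> = (\<Oplus>i\<in>{..<n}. \<zero> \<otimes> a i)" by simp
    then have "\<zero> \<in> LCS n a" unfolding LCS_def by auto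
    then show "LCS n a \<noteq> {}" by blast
  next
    fix x assume "x \<in> LCS n a"
    then obtain r where r: "\<forall>i<n. r i \<in> carrier R" "x = (\<Oplus>i\<in>{..<n}. r i \<otimes> a i)"
      unfolding LCS_def by blast
    have "\<ominus> x = (\<Oplus>i\<in>{..<n}. \<ominus> (r i \<otimes> a i))" using r a by (simp add: fs_neg)
    also have "\<dots> = (\<Oplus>i\<in>{..<n}. (\<ominus> r i) \<otimes> a i)" using r a by (intro fs_cong) (auto simp: l_minus)
    finally show "\<ominus> x \<in> LCS n a" unfolding LCS_def using r
      by (intro CollectI exI[of _ "\<lambda>i. \<ominus> r i"]) auto
  next
    fix x y assume "x \<in> LCS n a" "y \<in> LCS n a"
    then obtain r s where r: "\<forall>i<n. r i \<in> carrier R" "x = (\<Oplus>i\<in>{..<n}. r i \<otimes> a i)"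
      and s: "\<forall>i<n. s i \<in> carrier R" "y = (\<Oplus>i\<in>{..<n}. s i \<otimes> a i)"
      unfolding LCS_def by blast
    have "x \<oplus> y = (\<Oplus>i\<in>{..<n}. r i \<otimes> a i \<oplus> s i \<otimes> a i)"
      using r s a by (simp add: finsum_addf Pi_def)
    also have "\<dots> = (\<Oplus>i\<in>{..<n}. (r i \<oplus> s i) \<otimes> a i)"
      using r s a by (intro fs_cong) (auto simp: l_distr)
    finally show "x \<oplus> y \<in> LCS n a" unfolding LCS_def using r s
      by (intro CollectI exI[of _ "\<lambda>i. r i \<oplus> s i"]) auto
  qed
next
  fix x y assume "x \<in> LCS n a" "y \<in> carrier R"
  then obtain r where r: "\<forall>i<n. r i \<in> carrier R" "x = (\<Oplus>i\<in>{..<n}. r i \<otimes> a i)"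
    unfolding LCS_def by blast
  have "y \<otimes> x = (\<Oplus>i\<in>{..<n}. y \<otimes> (r i \<otimes> a i))" using r a \<open>y \<in> carrier R\<close> by (simp add: fs_mult_l)
  also have "\<dots> = (\<Oplus>i\<in>{..<n}. (y \<otimes> r i) \<otimes> a i)"
    using r a \<open>y \<in> carrier R\<close> by (intro fs_cong) (auto simp: m_assoc)
  finally show "y \<otimes> x \<in> LCS n a" unfolding LCS_def using r \<open>y \<in> carrier R\<close>
    by (intro CollectI exI[of _ "\<lambda>i. y \<otimes> r i"]) auto
  moreover have "x \<in> carrier R" using r a by (simp add: fs_closed)
  ultimately show "x \<otimes> y \<in> LCS n a" using \<open>y \<in> carrier R\<close> by (simp add: m_comm)
qed

lemma Idl_LCS:
  assumes a: "\<forall>i<n. a i \<in> carrier R"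
  shows "Idl (a ` {..<n}) = LCS n a"
proof
  show "Idl (a ` {..<n}) \<subseteq> LCS n a"
  proof (rule genideal_minimal[OF LCS_ideal[OF a]], safe)
    fix k assume k: "k < n"
    let ?r = "\<lambda>i. if i = k then \<one> else \<zero>"
    have "(\<Oplus>i\<in>{..<n}. ?r i \<otimes> a i) = (\<Oplus>i\<in>{..<n}. if i = k then a i else \<zero>)"
      using a by (intro fs_cong) auto
    also have "\<dots> = a k"
      using k a by (intro add.finprod_singleton_swap) auto
    finally show "a k \<in> LCS n a" unfolding LCS_def
      by (intro CollectI exI[of _ ?r]) auto
  qed
  show "LCS n a \<subseteq> Idl (a ` {..<n})"
  proof
    fix x assume "x \<in> LCS n a"
    then obtain r where r: "\<forall>i<n. r i \<in> carrier R" "x = (\<Oplus>i\<in>{..<n}. r i \<otimes> a i)"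
      unfolding LCS_def by blast
    have I: "ideal (Idl (a ` {..<n})) R" using a by (intro genideal_ideal) auto
    show "x \<in> Idl (a ` {..<n})" unfolding r(2)
    proof (rule fs_in_ideal[OF I])
      fix i assume "i < n"
      then have "a i \<in> Idl (a ` {..<n})" using genideal_self[of "a ` {..<n}"] a by auto
      then show "r i \<otimes> a i \<in> Idl (a ` {..<n})" using ideal.I_l_closed[OF I] r \<open>i<n\<close> by auto
    qed
  qed
qed

end

context cring begin

definition fin_syz :: "nat \<Rightarrow> (nat \<Rightarrow> 'a) \<Rightarrow> bool" where
  "fin_syz n a \<longleftrightarrow> (\<exists>(m::nat) s. (\<forall>j<m. syzygy R n a (s j)) \<and>
           (\<forall>r. syzygy R n a r \<longrightarrow>
              (\<exists>c. (\<forall>j<m. c j \<in> carrier R) \<and>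
                   (\<forall>i<n. r i = (\<Oplus>j\<in>{..<m}. c j \<otimes> s j i)))))"

lemma lin_comp:
  fixes n m :: nat
  assumes "\<And>i. i < n \<Longrightarrow> x i \<in> carrier R"
    and "\<And>i k. i < n \<Longrightarrow> k < m \<Longrightarrow> M i k \<in> carrier R"
    and "\<And>k. k < m \<Longrightarrow> v k \<in> carrier R"
  shows "(\<Oplus>i\<in>{..<n}. x i \<otimes> (\<Oplus>k\<in>{..<m}. M i k \<otimes> v k))
       = (\<Oplus>k\<in>{..<m}. (\<Oplus>i\<in>{..<n}. x i \<otimes> M i k) \<otimes> v k)"
proof -
  have "(\<Oplus>i\<in>{..<n}. x i \<otimes> (\<Oplus>k\<in>{..<m}. M i k \<otimes> v k))
      = (\<Oplus>i\<in>{..<n}. \<Oplus>k\<in>{..<m}. x i \<otimes> M i k \<otimes> v k)"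
    using assms by (intro fs_cong) (auto simp: fs_mult_l m_assoc intro!: fs_closed fs_cong)
  also have "\<dots> = (\<Oplus>k\<in>{..<m}. \<Oplus>i\<in>{..<n}. x i \<otimes> M i k \<otimes> v k)"
    using assms by (intro fs_swap) auto
  also have "\<dots> = (\<Oplus>k\<in>{..<m}. (\<Oplus>i\<in>{..<n}. x i \<otimes> M i k) \<otimes> v k)"
    using assms by (intro fs_cong) (auto simp: fs_mult_r intro!: fs_closed)
  finally show ?thesis .
qed

lemma fs_delta:
  fixes m :: nat
  assumes "k < m" "\<And>i. i < m \<Longrightarrow> f i \<in> carrier R"
  shows "(\<Oplus>i\<in>{..<m}. f i \<otimes> (if k = i then \<one> else \<zero>)) = f k"
proof -
  have "(\<Oplus>i\<in>{..<m}. f i \<otimes> (if k = i then \<one> else \<zero>)) = (\<Oplus>i\<in>{..<m}. if i = k then f i else \<zero>)"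
    using assms by (intro fs_cong) auto
  also have "\<dots> = f k" using assms by (intro add.finprod_singleton_swap) auto
  finally show ?thesis .
qed

lemma fs_delta':
  fixes m :: nat
  assumes "k < m" "\<And>i. i < m \<Longrightarrow> f i \<in> carrier R"
  shows "(\<Oplus>i\<in>{..<m}. (if i = k then \<one> else \<zero>) \<otimes> f i) = f k"
proof -
  have "(\<Oplus>i\<in>{..<m}. (if i = k then \<one> else \<zero>) \<otimes> f i) = (\<Oplus>i\<in>{..<m}. if i = k then f i else \<zero>)"
    using assms by (intro fs_cong) auto
  also have "\<dots> = f k" using assms by (intro add.finprod_singleton_swap) auto
  finally show ?thesis .
qed

lemma transfer:
  fixes n m :: nat
  assumes a: "\<forall>i<n. a i \<in> carrier R" and b: "\<forall>k<m. b k \<in> carrier R"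
    and eq: "Idl (a ` {..<n}) = Idl (b ` {..<m})"
    and fs: "fin_syz n a"
  shows "fin_syz m b"
proof -
  have "\<forall>k<m. \<exists>p. (\<forall>i<n. p i \<in> carrier R) \<and> b k = (\<Oplus>i\<in>{..<n}. p i \<otimes> a i)"
  proof (intro allI impI)
    fix k assume "k < m"
    then have "b k \<in> Idl (b ` {..<m})" using genideal_self[of "b ` {..<m}"] b by auto
    then show "\<exists>p. (\<forall>i<n. p i \<in> carrier R) \<and> b k = (\<Oplus>i\<in>{..<n}. p i \<otimes> a i)"
      using eq Idl_LCS[OF a] unfolding LCS_def by auto
  qed
  then obtain P where P: "\<And>k i. k < m \<Longrightarrow> i < n \<Longrightarrow> P k i \<in> carrier R"
    and Pb: "\<And>k. k < m \<Longrightarrow> b k = (\<Oplus>i\<in>{..<n}. P k i \<otimes> a i)"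
    by metis
  have "\<forall>i<n. \<exists>q. (\<forall>k<m. q k \<in> carrier R) \<and> a i = (\<Oplus>k\<in>{..<m}. q k \<otimes> b k)"
  proof (intro allI impI)
    fix i assume "i < n"
    then have "a i \<in> Idl (a ` {..<n})" using genideal_self[of "a ` {..<n}"] a by auto
    then show "\<exists>q. (\<forall>k<m. q k \<in> carrier R) \<and> a i = (\<Oplus>k\<in>{..<m}. q k \<otimes> b k)"
      using eq Idl_LCS[OF b] unfolding LCS_def by auto
  qed
  then obtain Q where Q: "\<And>i k. i < n \<Longrightarrow> k < m \<Longrightarrow> Q i k \<in> carrier R"
    and Qa: "\<And>i. i < n \<Longrightarrow> a i = (\<Oplus>k\<in>{..<m}. Q i k \<otimes> b k)"
    by metis
  obtain m1 :: nat and s where s': "\<forall>j<m1. syzygy R n a (s j)"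
    and sgen': "\<forall>r. syzygy R n a r \<longrightarrow> (\<exists>c. (\<forall>j<m1. c j \<in> carrier R) \<and>
                   (\<forall>i<n. r i = (\<Oplus>j\<in>{..<m1}. c j \<otimes> s j i)))"
    using fs unfolding fin_syz_def by blast
  have s: "\<And>j. j < m1 \<Longrightarrow> syzygy R n a (s j)" using s' by blast
  have sgen: "\<And>r. syzygy R n a r \<Longrightarrow> \<exists>c. (\<forall>j<m1. c j \<in> carrier R) \<and>
                   (\<forall>i<n. r i = (\<Oplus>j\<in>{..<m1}. c j \<otimes> s j i))" using sgen' by blast
  have sc: "\<And>j i. j < m1 \<Longrightarrow> i < n \<Longrightarrow> s j i \<in> carrier R" using s unfolding syzygy_def by blast
  have s0: "\<And>j. j < m1 \<Longrightarrow> (\<Oplus>i\<in>{..<n}. s j i \<otimes> a i) = \<zero>" using s unfolding syzygy_def by blast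
  define psi where "psi = (\<lambda>x k. if k < m then (\<Oplus>i\<in>{..<n}. x i \<otimes> Q i k) else \<zero>)"
  define g where "g = (\<lambda>k k'. if k' < m then (if k' = k then \<one> else \<zero>) \<ominus> (\<Oplus>i\<in>{..<n}. P k i \<otimes> Q i k') else \<zero>)"
  define T where "T = (\<lambda>j. if j < m1 then psi (s j) else g (j - m1))"
  have psi_c: "\<And>x k. (\<And>i. i < n \<Longrightarrow> x i \<in> carrier R) \<Longrightarrow> psi x k \<in> carrier R"
    unfolding psi_def using Q by (auto intro!: fs_closed)
  have g_c: "\<And>k k'. k < m \<Longrightarrow> g k k' \<in> carrier R"
    unfolding g_def using Q P by (auto intro!: fs_closed)
  have psi_sum: "\<And>x. (\<And>i. i < n \<Longrightarrow> x i \<in> carrier R) \<Longrightarrow>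
      (\<Oplus>k\<in>{..<m}. psi x k \<otimes> b k) = (\<Oplus>i\<in>{..<n}. x i \<otimes> a i)"
  proof -
    fix x assume x: "\<And>i. i < n \<Longrightarrow> x i \<in> carrier R"
    have "(\<Oplus>i\<in>{..<n}. x i \<otimes> a i) = (\<Oplus>i\<in>{..<n}. x i \<otimes> (\<Oplus>k\<in>{..<m}. Q i k \<otimes> b k))"
      using x Q b by (intro fs_cong) (auto simp: Qa intro!: fs_closed)
    also have "\<dots> = (\<Oplus>k\<in>{..<m}. (\<Oplus>i\<in>{..<n}. x i \<otimes> Q i k) \<otimes> b k)"
      using x Q b by (intro lin_comp) auto
    also have "\<dots> = (\<Oplus>k\<in>{..<m}. psi x k \<otimes> b k)"
      using x Q b psi_c by (intro fs_cong) (auto simp: psi_def)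
    finally show "(\<Oplus>k\<in>{..<m}. psi x k \<otimes> b k) = (\<Oplus>i\<in>{..<n}. x i \<otimes> a i)" by simp
  qed
  have T_syz: "syzygy R m b (T j)" if j: "j < m1 + m" for j
  proof (cases "j < m1")
    case True
    have "(\<Oplus>k\<in>{..<m}. psi (s j) k \<otimes> b k) = \<zero>" using psi_sum[of "s j"] sc s0 True by simp
    moreover have "\<forall>k\<ge>m. psi (s j) k = \<zero>" by (simp add: psi_def)
    ultimately show ?thesis unfolding T_def syzygy_def
      using psi_c[of "s j"] sc True by auto
  next
    case False
    define k where "k = j - m1"
    have k: "k < m" using j False by (simp add: k_def)
    have "(\<Oplus>k'\<in>{..<m}. g k k' \<otimes> b k')
       = (\<Oplus>k'\<in>{..<m}. (if k' = k then \<one> else \<zero>) \<otimes> b k' \<ominus> (\<Oplus>i\<in>{..<n}. P k i \<otimes> Q i k') \<otimes> b k')"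
      using k P Q b by (intro fs_cong) (auto simp: g_def l_minus minus_eq l_distr intro!: fs_closed)
    also have "\<dots> = (\<Oplus>k'\<in>{..<m}. (if k' = k then \<one> else \<zero>) \<otimes> b k') \<ominus> (\<Oplus>k'\<in>{..<m}. (\<Oplus>i\<in>{..<n}. P k i \<otimes> Q i k') \<otimes> b k')"
      using k P Q b by (intro fs_diff[symmetric]) (auto intro!: fs_closed)
    also have "(\<Oplus>k'\<in>{..<m}. (\<Oplus>i\<in>{..<n}. P k i \<otimes> Q i k') \<otimes> b k') = (\<Oplus>i\<in>{..<n}. P k i \<otimes> a i)"
    proof -
      have "(\<Oplus>k'\<in>{..<m}. (\<Oplus>i\<in>{..<n}. P k i \<otimes> Q i k') \<otimes> b k') = (\<Oplus>k'\<in>{..<m}. psi (P k) k' \<otimes> b k')"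
        using k P b Q psi_c[of "P k"] by (intro fs_cong) (auto simp: psi_def)
      then show ?thesis using psi_sum[of "P k"] k P by simp
    qed
    also have "(\<Oplus>k'\<in>{..<m}. (if k' = k then \<one> else \<zero>) \<otimes> b k') = b k"
      using k b by (intro fs_delta') auto
    finally have "(\<Oplus>k'\<in>{..<m}. g k k' \<otimes> b k') = \<zero>" using b k by (simp add: Pb[OF k, symmetric] minus_eq r_neg)
    moreover have "\<forall>k'\<ge>m. g k k' = \<zero>" by (simp add: g_def)
    moreover have "T j = g k" using False by (simp add: T_def k_def)
    ultimately show ?thesis unfolding syzygy_def using g_c[OF k] by auto
  qed
  show ?thesis unfolding fin_syz_def
  proof (intro exI[of _ "m1 + m"] exI[of _ T] conjI allI impI)
    fix j assume "j < m1 + m" then show "syzygy R m b (T j)" by (rule T_syz)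
  next
    fix r assume r: "syzygy R m b r"
    have rc: "\<And>k. k < m \<Longrightarrow> r k \<in> carrier R" using r unfolding syzygy_def by blast
    have r0: "(\<Oplus>k\<in>{..<m}. r k \<otimes> b k) = \<zero>" using r unfolding syzygy_def by blast
    define phi where "phi = (\<lambda>i. if i < n then (\<Oplus>k\<in>{..<m}. r k \<otimes> P k i) else \<zero>)"
    have phic: "\<And>i. phi i \<in> carrier R" unfolding phi_def using rc P by (auto intro!: fs_closed)
    have "(\<Oplus>i\<in>{..<n}. phi i \<otimes> a i) = (\<Oplus>i\<in>{..<n}. (\<Oplus>k\<in>{..<m}. r k \<otimes> P k i) \<otimes> a i)"
      using rc P a by (intro fs_cong) (auto simp: phi_def intro!: fs_closed)
    also have "\<dots> = (\<Oplus>k\<in>{..<m}. r k \<otimes> (\<Oplus>i\<in>{..<n}. P k i \<otimes> a i))"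
      using rc P a by (intro lin_comp[symmetric]) auto
    also have "\<dots> = \<zero>" using r0 rc b by (subst fs_cong[where g = "\<lambda>k. r k \<otimes> b k"]) (auto simp: Pb)
    finally have "(\<Oplus>i\<in>{..<n}. phi i \<otimes> a i) = \<zero>" .
    moreover have "\<forall>i\<ge>n. phi i = \<zero>" by (simp add: phi_def)
    ultimately have "syzygy R n a phi" unfolding syzygy_def using phic by auto
    then obtain c where c: "\<forall>j<m1. c j \<in> carrier R" and cphi: "\<forall>i<n. phi i = (\<Oplus>j\<in>{..<m1}. c j \<otimes> s j i)"
      using sgen by blast
    define d where "d = (\<lambda>j. if j < m1 then c j else r (j - m1))"
    show "\<exists>c. (\<forall>j<m1 + m. c j \<in> carrier R) \<and> (\<forall>i<m. r i = (\<Oplus>j\<in>{..<m1 + m}. c j \<otimes> T j i))"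
    proof (intro exI[of _ d] conjI allI impI)
      fix j assume "j < m1 + m" then show "d j \<in> carrier R" using c rc by (auto simp: d_def)
    next
      fix k' assume k': "k' < m"
      define F where "F = (\<Oplus>i\<in>{..<n}. phi i \<otimes> Q i k')"
      have Fc: "F \<in> carrier R" unfolding F_def using phic Q k' by (auto intro!: fs_closed)
      have "(\<Oplus>j\<in>{..<m1 + m}. d j \<otimes> T j k') = (\<Oplus>j\<in>{..<m1}. d j \<otimes> T j k') \<oplus> (\<Oplus>k\<in>{..<m}. d (m1 + k) \<otimes> T (m1 + k) k')"
        using c rc psi_c sc g_c by (intro fs_split_add) (auto simp: d_def T_def)
      also have "(\<Oplus>j\<in>{..<m1}. d j \<otimes> T j k') = (\<Oplus>j\<in>{..<m1}. c j \<otimes> (\<Oplus>i\<in>{..<n}. s j i \<otimes> Q i k'))"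
        using c sc Q k' by (intro fs_cong) (auto simp: d_def T_def psi_def intro!: fs_closed)
      also have "\<dots> = (\<Oplus>i\<in>{..<n}. (\<Oplus>j\<in>{..<m1}. c j \<otimes> s j i) \<otimes> Q i k')"
        using c sc Q k' by (intro lin_comp) auto
      also have "\<dots> = F" unfolding F_def using cphi phic Q k' c sc by (intro fs_cong) (auto intro!: fs_closed)
      also have "(\<Oplus>k\<in>{..<m}. d (m1 + k) \<otimes> T (m1 + k) k')
          = (\<Oplus>k\<in>{..<m}. r k \<otimes> (if k' = k then \<one> else \<zero>) \<ominus> r k \<otimes> (\<Oplus>i\<in>{..<n}. P k i \<otimes> Q i k'))"
        using rc P Q k' by (intro fs_cong) (auto simp: d_def T_def g_def r_minus minus_eq r_distr intro!: fs_closed)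
      also have "\<dots> = (\<Oplus>k\<in>{..<m}. r k \<otimes> (if k' = k then \<one> else \<zero>)) \<ominus> (\<Oplus>k\<in>{..<m}. r k \<otimes> (\<Oplus>i\<in>{..<n}. P k i \<otimes> Q i k'))"
        using rc P Q k' by (intro fs_diff[symmetric]) (auto intro!: fs_closed)
      also have "(\<Oplus>k\<in>{..<m}. r k \<otimes> (if k' = k then \<one> else \<zero>)) = r k'"
        using rc k' by (intro fs_delta) auto
      also have "(\<Oplus>k\<in>{..<m}. r k \<otimes> (\<Oplus>i\<in>{..<n}. P k i \<otimes> Q i k')) = (\<Oplus>i\<in>{..<n}. (\<Oplus>k\<in>{..<m}. r k \<otimes> P k i) \<otimes> Q i k')"
        using rc P Q k' by (intro lin_comp) auto
      also have "\<dots> = F" unfolding F_def using rc P Q k' by (intro fs_cong) (auto simp: phi_def intro!: fs_closed)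
      finally show "r k' = (\<Oplus>j\<in>{..<m1 + m}. d j \<otimes> T j k')"
        using Fc rc[OF k'] by algebra
    qed
  qed
qed

end

context domain begin

lemma key_case:
  fixes n :: nat
  assumes a: "\<forall>i<n. a i \<in> carrier R" and u: "u \<in> carrier R" "u \<noteq> \<zero>"
    and Qfs: "cring.fin_syz (R Quot (PIdl u)) n (\<lambda>i. PIdl u +> a i)"
  shows "fin_syz (Suc n) (\<lambda>i. if i = 0 then u else a (i - 1))"
proof -
  define J where "J = PIdl u"
  define Q where "Q = R Quot J"
  define p where "p = (\<lambda>x. J +> x)"
  define A where "A = (\<lambda>i::nat. if i = 0 then u else a (i - 1))"
  have Jid: "ideal J R" unfolding J_def using u(1) by (rule cgenideal_ideal)
  interpret J: ideal J R by (rule Jid)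
  interpret Q: cring Q unfolding Q_def by (rule J.quotient_is_cring[OF is_cring])
  interpret h: ring_hom_cring R Q p unfolding Q_def p_def by (rule J.rcos_ring_hom_cring[OF is_cring])
  have Qfs': "Q.fin_syz n (\<lambda>i. p (a i))" using Qfs unfolding Q_def p_def J_def .
  have lift: "\<And>X. X \<in> carrier Q \<Longrightarrow> \<exists>x\<in>carrier R. p x = X"
    unfolding Q_def p_def by (auto simp: FactRing_def A_RCOSETS_def RCOSETS_def a_r_coset_def)
  have ker: "\<And>x. x \<in> carrier R \<Longrightarrow> p x = \<zero>\<^bsub>Q\<^esub> \<longleftrightarrow> (\<exists>w\<in>carrier R. x = w \<otimes> u)"
  proof -
    fix x assume x: "x \<in> carrier R"
    have "p x = \<zero>\<^bsub>Q\<^esub> \<longleftrightarrow> x \<in> J"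
      unfolding p_def Q_def using J.rcos_const_imp_mem[OF x] a_rcos_zero[OF Jid]
      by (auto simp: FactRing_def)
    also have "\<dots> \<longleftrightarrow> (\<exists>w\<in>carrier R. x = w \<otimes> u)" unfolding J_def cgenideal_def by auto
    finally show "p x = \<zero>\<^bsub>Q\<^esub> \<longleftrightarrow> (\<exists>w\<in>carrier R. x = w \<otimes> u)" .
  qed

  have pc: "\<And>x. x \<in> carrier R \<Longrightarrow> p x \<in> carrier Q" by simp
  obtain m :: nat and sb where sb': "\<forall>j<m. syzygy Q n (\<lambda>i. p (a i)) (sb j)"
    and sgen': "\<forall>r. syzygy Q n (\<lambda>i. p (a i)) r \<longrightarrow> (\<exists>c. (\<forall>j<m. c j \<in> carrier Q) \<and>
                   (\<forall>i<n. r i = (\<Oplus>\<^bsub>Q\<^esub>j\<in>{..<m}. c j \<otimes>\<^bsub>Q\<^esub> sb j i)))"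
    using Qfs' unfolding Q.fin_syz_def by blast
  have sbc: "\<And>j i. j < m \<Longrightarrow> i < n \<Longrightarrow> sb j i \<in> carrier Q" using sb' unfolding syzygy_def by blast
  have sb0: "\<And>j. j < m \<Longrightarrow> (\<Oplus>\<^bsub>Q\<^esub>i\<in>{..<n}. sb j i \<otimes>\<^bsub>Q\<^esub> p (a i)) = \<zero>\<^bsub>Q\<^esub>"
    using sb' unfolding syzygy_def by blast
  define S where "S = (\<lambda>j i. SOME x. x \<in> carrier R \<and> p x = sb j i)"
  have S: "\<And>j i. j < m \<Longrightarrow> i < n \<Longrightarrow> S j i \<in> carrier R \<and> p (S j i) = sb j i"
  proof -
    fix j i assume ji: "j < m" "i < n"
    have ex: "\<exists>x. x \<in> carrier R \<and> p x = sb j i" using lift[OF sbc[OF ji]] by blast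
    show "S j i \<in> carrier R \<and> p (S j i) = sb j i" unfolding S_def by (rule someI_ex[OF ex])
  qed
  have "\<forall>j<m. \<exists>t\<in>carrier R. (\<Oplus>i\<in>{..<n}. S j i \<otimes> a i) = t \<otimes> u"
  proof (intro allI impI)
    fix j assume j: "j < m"
    have "p (\<Oplus>i\<in>{..<n}. S j i \<otimes> a i) = (\<Oplus>\<^bsub>Q\<^esub>i\<in>{..<n}. p (S j i \<otimes> a i))"
      using S j a by (subst h.hom_finsum) (auto simp: Pi_def o_def)
    also have "\<dots> = (\<Oplus>\<^bsub>Q\<^esub>i\<in>{..<n}. sb j i \<otimes>\<^bsub>Q\<^esub> p (a i))"
      using S j a sbc by (intro Q.fs_cong) auto
    also have "\<dots> = \<zero>\<^bsub>Q\<^esub>" using sb0 j by simp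
    finally have "p (\<Oplus>i\<in>{..<n}. S j i \<otimes> a i) = \<zero>\<^bsub>Q\<^esub>" .
    moreover have "(\<Oplus>i\<in>{..<n}. S j i \<otimes> a i) \<in> carrier R" using S j a by (auto intro!: fs_closed)
    ultimately show "\<exists>t\<in>carrier R. (\<Oplus>i\<in>{..<n}. S j i \<otimes> a i) = t \<otimes> u"
      using ker by blast
  qed
  then have "\<forall>j. \<exists>t. j < m \<longrightarrow> t \<in> carrier R \<and> (\<Oplus>i\<in>{..<n}. S j i \<otimes> a i) = t \<otimes> u" by blast
  from choice[OF this] obtain t where
    "\<forall>j. j < m \<longrightarrow> t j \<in> carrier R \<and> (\<Oplus>i\<in>{..<n}. S j i \<otimes> a i) = t j \<otimes> u" by blast
  then have tc: "\<And>j. j < m \<Longrightarrow> t j \<in> carrier R"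
    and tS: "\<And>j. j < m \<Longrightarrow> (\<Oplus>i\<in>{..<n}. S j i \<otimes> a i) = t j \<otimes> u" by auto
  define L where "L = (\<lambda>j i. if i = 0 then \<ominus> t j else if i \<le> n then S j (i - 1) else \<zero>)"
  define K where "K = (\<lambda>k i. if i = 0 then a k else if i = Suc k then \<ominus> u else \<zero>)"
  define G where "G = (\<lambda>j. if j < m then L j else K (j - m))"
  have Lc': "\<And>j i. j < m \<Longrightarrow> L j i \<in> carrier R" using tc S by (auto simp: L_def)
  have Kc': "\<And>k i. k < n \<Longrightarrow> K k i \<in> carrier R" using a u by (auto simp: K_def)
  have Ac: "\<And>i. i < Suc n \<Longrightarrow> A i \<in> carrier R" using a u by (auto simp: A_def)
  have G_syz: "syzygy R (Suc n) A (G j)" if j: "j < m + n" for j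
  proof (cases "j < m")
    case True
    have Lc: "\<And>i. L j i \<in> carrier R" using tc S True by (auto simp: L_def)
    have "(\<Oplus>i\<in>{..<Suc n}. L j i \<otimes> A i) = L j 0 \<otimes> A 0 \<oplus> (\<Oplus>i\<in>{..<n}. L j (Suc i) \<otimes> A (Suc i))"
      using Lc Ac by (intro fs_shift) auto
    also have "(\<Oplus>i\<in>{..<n}. L j (Suc i) \<otimes> A (Suc i)) = (\<Oplus>i\<in>{..<n}. S j i \<otimes> a i)"
      using S True a by (intro fs_cong) (auto simp: L_def A_def)
    also have "\<dots> = t j \<otimes> u" using tS True by simp
    finally have "(\<Oplus>i\<in>{..<Suc n}. L j i \<otimes> A i) = \<zero>"
      using tc[OF True] u by (simp add: L_def A_def) algebra
    moreover have "\<forall>i\<ge>Suc n. L j i = \<zero>" by (auto simp: L_def)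
    ultimately show ?thesis using Lc True unfolding syzygy_def G_def by auto
  next
    case False
    define k where "k = j - m"
    have k: "k < n" using j False by (simp add: k_def)
    have Kc: "\<And>i. K k i \<in> carrier R" using a u k by (auto simp: K_def)
    have "(\<Oplus>i\<in>{..<Suc n}. K k i \<otimes> A i) = K k 0 \<otimes> A 0 \<oplus> (\<Oplus>i\<in>{..<n}. K k (Suc i) \<otimes> A (Suc i))"
      using Kc Ac by (intro fs_shift) auto
    also have "(\<Oplus>i\<in>{..<n}. K k (Suc i) \<otimes> A (Suc i)) = (\<Oplus>i\<in>{..<n}. if i = k then \<ominus> u \<otimes> a i else \<zero>)"
      using a u k by (intro fs_cong) (auto simp: K_def A_def)
    also have "\<dots> = \<ominus> u \<otimes> a k" using a u k by (intro add.finprod_singleton_swap) auto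
    finally have "(\<Oplus>i\<in>{..<Suc n}. K k i \<otimes> A i) = \<zero>"
      using a u k by (simp add: K_def A_def) algebra
    moreover have "\<forall>i\<ge>Suc n. K k i = \<zero>" using k by (auto simp: K_def)
    moreover have "G j = K k" using False by (simp add: G_def k_def)
    ultimately show ?thesis using Kc unfolding syzygy_def by auto
  qed
  show ?thesis unfolding A_def[symmetric] fin_syz_def
  proof (intro exI[of _ "m + n"] exI[of _ G] conjI allI impI)
    fix j assume "j < m + n" then show "syzygy R (Suc n) A (G j)" by (rule G_syz)
  next
    fix r assume r: "syzygy R (Suc n) A r"
    have rc: "\<And>i. i < Suc n \<Longrightarrow> r i \<in> carrier R" using r unfolding syzygy_def by blast
    have "(\<Oplus>i\<in>{..<Suc n}. r i \<otimes> A i) = \<zero>" using r unfolding syzygy_def by blast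
    moreover have "(\<Oplus>i\<in>{..<Suc n}. r i \<otimes> A i) = r 0 \<otimes> A 0 \<oplus> (\<Oplus>i\<in>{..<n}. r (Suc i) \<otimes> A (Suc i))"
      using rc Ac by (intro fs_shift) auto
    moreover have "(\<Oplus>i\<in>{..<n}. r (Suc i) \<otimes> A (Suc i)) = (\<Oplus>i\<in>{..<n}. r (Suc i) \<otimes> a i)"
      using rc a by (intro fs_cong) (auto simp: A_def)
    ultimately have rsum: "r 0 \<otimes> u \<oplus> (\<Oplus>i\<in>{..<n}. r (Suc i) \<otimes> a i) = \<zero>" by (simp add: A_def)
    have rhoc: "(\<Oplus>i\<in>{..<n}. r (Suc i) \<otimes> a i) \<in> carrier R" using rc a by (auto intro!: fs_closed)
    have r0c: "r 0 \<in> carrier R" using rc by auto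
    have rho_eq: "(\<Oplus>i\<in>{..<n}. r (Suc i) \<otimes> a i) = (\<ominus> r 0) \<otimes> u"
    proof -
      have aux: "\<And>x y. x \<in> carrier R \<Longrightarrow> y \<in> carrier R \<Longrightarrow> y = \<ominus> x \<oplus> (x \<oplus> y)"
        by (metis a_assoc l_neg l_zero add.inv_closed)
      have "(\<Oplus>i\<in>{..<n}. r (Suc i) \<otimes> a i) = \<ominus> (r 0 \<otimes> u) \<oplus> \<zero>"
        using aux[of "r 0 \<otimes> u", OF _ rhoc] r0c u rsum by simp
      then show ?thesis using r0c u by (simp add: l_minus)
    qed
    define rb where "rb = (\<lambda>i. if i < n then p (r (Suc i)) else \<zero>\<^bsub>Q\<^esub>)"
    have rbc: "\<And>i. rb i \<in> carrier Q" using rc by (auto simp: rb_def)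
    have "(\<Oplus>\<^bsub>Q\<^esub>i\<in>{..<n}. rb i \<otimes>\<^bsub>Q\<^esub> p (a i)) = (\<Oplus>\<^bsub>Q\<^esub>i\<in>{..<n}. p (r (Suc i) \<otimes> a i))"
      using rc a by (intro Q.fs_cong) (auto simp: rb_def)
    also have "\<dots> = p (\<Oplus>i\<in>{..<n}. r (Suc i) \<otimes> a i)"
      using rc a by (subst h.hom_finsum) (auto simp: Pi_def o_def)
    also have "\<dots> = \<zero>\<^bsub>Q\<^esub>" using ker[OF rhoc] rho_eq r0c by auto
    finally have "(\<Oplus>\<^bsub>Q\<^esub>i\<in>{..<n}. rb i \<otimes>\<^bsub>Q\<^esub> p (a i)) = \<zero>\<^bsub>Q\<^esub>" .
    moreover have "\<forall>i\<ge>n. rb i = \<zero>\<^bsub>Q\<^esub>" by (simp add: rb_def)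
    ultimately have "syzygy Q n (\<lambda>i. p (a i)) rb" unfolding syzygy_def using rbc by auto
    then obtain cb where cbc: "\<forall>j<m. cb j \<in> carrier Q"
      and cbr: "\<forall>i<n. rb i = (\<Oplus>\<^bsub>Q\<^esub>j\<in>{..<m}. cb j \<otimes>\<^bsub>Q\<^esub> sb j i)"
      using sgen' by blast
    define c where "c = (\<lambda>j. SOME x. x \<in> carrier R \<and> p x = cb j)"
    have c: "\<And>j. j < m \<Longrightarrow> c j \<in> carrier R \<and> p (c j) = cb j"
    proof -
      fix j assume j: "j < m"
      have ex: "\<exists>x. x \<in> carrier R \<and> p x = cb j" using lift cbc j by blast
      show "c j \<in> carrier R \<and> p (c j) = cb j" unfolding c_def by (rule someI_ex[OF ex])
    qed
    define Y where "Y = (\<lambda>i. \<Oplus>j\<in>{..<m}. c j \<otimes> S j i)"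
    have Yc: "\<And>i. i < n \<Longrightarrow> Y i \<in> carrier R" unfolding Y_def using c S by (auto intro!: fs_closed)
    have "\<forall>i<n. \<exists>w\<in>carrier R. r (Suc i) \<ominus> Y i = w \<otimes> u"
    proof (intro allI impI)
      fix i assume i: "i < n"
      have "p (Y i) = (\<Oplus>\<^bsub>Q\<^esub>j\<in>{..<m}. p (c j \<otimes> S j i))"
        unfolding Y_def using c S i by (subst h.hom_finsum) (auto simp: Pi_def o_def)
      also have "\<dots> = (\<Oplus>\<^bsub>Q\<^esub>j\<in>{..<m}. cb j \<otimes>\<^bsub>Q\<^esub> sb j i)"
        using c S i cbc sbc by (intro Q.fs_cong) auto
      also have "\<dots> = p (r (Suc i))" using cbr i by (simp add: rb_def)
      finally have "p (r (Suc i) \<ominus> Y i) = \<zero>\<^bsub>Q\<^esub>"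
        using rc i Yc by (simp add: minus_eq Q.minus_eq Q.r_neg)
      then show "\<exists>w\<in>carrier R. r (Suc i) \<ominus> Y i = w \<otimes> u" using ker rc i Yc by auto
    qed
    then have "\<forall>i. \<exists>w. i < n \<longrightarrow> w \<in> carrier R \<and> r (Suc i) \<ominus> Y i = w \<otimes> u" by blast
    from choice[OF this] obtain w where
      "\<forall>i. i < n \<longrightarrow> w i \<in> carrier R \<and> r (Suc i) \<ominus> Y i = w i \<otimes> u" by blast
    then have wc: "\<And>i. i < n \<Longrightarrow> w i \<in> carrier R"
      and wY: "\<And>i. i < n \<Longrightarrow> r (Suc i) \<ominus> Y i = w i \<otimes> u" by auto
    define d where "d = (\<lambda>j. if j < m then c j else \<ominus> w (j - m))"
    show "\<exists>c. (\<forall>j<m + n. c j \<in> carrier R) \<and> (\<forall>i<Suc n. r i = (\<Oplus>j\<in>{..<m + n}. c j \<otimes> G j i))"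
    proof (intro exI[of _ d] conjI allI impI)
      fix j assume "j < m + n" then show "d j \<in> carrier R" using c wc by (auto simp: d_def)
    next
      fix i assume i: "i < Suc n"
      have Gc: "\<And>j. j < m + n \<Longrightarrow> G j i \<in> carrier R"
        using G_syz i unfolding syzygy_def by blast
      have dc: "\<And>j. j < m + n \<Longrightarrow> d j \<in> carrier R" using c wc by (auto simp: d_def)
      have split: "(\<Oplus>j\<in>{..<m + n}. d j \<otimes> G j i) = (\<Oplus>j\<in>{..<m}. c j \<otimes> L j i) \<oplus> (\<Oplus>k\<in>{..<n}. (\<ominus> w k) \<otimes> K k i)"
      proof -
        have "(\<Oplus>j\<in>{..<m + n}. d j \<otimes> G j i) = (\<Oplus>j\<in>{..<m}. d j \<otimes> G j i) \<oplus> (\<Oplus>k\<in>{..<n}. d (m + k) \<otimes> G (m + k) i)"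
          using Gc dc by (intro fs_split_add) auto
        also have "(\<Oplus>j\<in>{..<m}. d j \<otimes> G j i) = (\<Oplus>j\<in>{..<m}. c j \<otimes> L j i)"
          using c Lc' by (intro fs_cong) (auto simp: d_def G_def)
        also have "(\<Oplus>k\<in>{..<n}. d (m + k) \<otimes> G (m + k) i) = (\<Oplus>k\<in>{..<n}. (\<ominus> w k) \<otimes> K k i)"
          using wc Kc' by (intro fs_cong) (auto simp: d_def G_def)
        finally show ?thesis .
      qed
      show "r i = (\<Oplus>j\<in>{..<m + n}. d j \<otimes> G j i)"
      proof (cases i)
        case (Suc i')
        have i': "i' < n" using i Suc by simp
        have "(\<Oplus>j\<in>{..<m}. c j \<otimes> L j i) = Y i'"
          unfolding Y_def using c S i' Suc by (intro fs_cong) (auto simp: L_def)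
        moreover have "(\<Oplus>k\<in>{..<n}. (\<ominus> w k) \<otimes> K k i) = (\<Oplus>k\<in>{..<n}. if k = i' then w k \<otimes> u else \<zero>)"
          using wc u Suc by (intro fs_cong) (auto simp: K_def l_minus r_minus)
        moreover have "(\<Oplus>k\<in>{..<n}. if k = i' then w k \<otimes> u else \<zero>) = w i' \<otimes> u"
          using wc u i' by (intro add.finprod_singleton_swap) auto
        moreover have "r (Suc i') = Y i' \<oplus> (r (Suc i') \<ominus> Y i')"
          using Yc[OF i'] rc[OF i] Suc by algebra
        ultimately show ?thesis using split wY[OF i'] Suc by simp
      next
        case 0
        define X where "X = (\<Oplus>j\<in>{..<m}. c j \<otimes> \<ominus> t j) \<oplus> (\<Oplus>k\<in>{..<n}. (\<ominus> w k) \<otimes> a k)"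
        have "(\<Oplus>j\<in>{..<m}. c j \<otimes> L j i) = (\<Oplus>j\<in>{..<m}. c j \<otimes> \<ominus> t j)"
          using c tc 0 by (intro fs_cong) (auto simp: L_def)
        moreover have "(\<Oplus>k\<in>{..<n}. (\<ominus> w k) \<otimes> K k i) = (\<Oplus>k\<in>{..<n}. (\<ominus> w k) \<otimes> a k)"
          using wc a 0 by (intro fs_cong) (auto simp: K_def)
        ultimately have sX: "(\<Oplus>j\<in>{..<m + n}. d j \<otimes> G j i) = X" using split X_def by simp
        have YA: "(\<Oplus>i\<in>{..<n}. Y i \<otimes> a i) \<in> carrier R" using Yc a by (auto intro!: fs_closed)
        have E1: "(\<Oplus>j\<in>{..<m}. c j \<otimes> \<ominus> t j) \<otimes> u = \<ominus> (\<Oplus>i\<in>{..<n}. Y i \<otimes> a i)"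
        proof -
          have "(\<Oplus>j\<in>{..<m}. c j \<otimes> \<ominus> t j) \<otimes> u = (\<Oplus>j\<in>{..<m}. c j \<otimes> \<ominus> t j \<otimes> u)"
            using c tc u by (intro fs_mult_r) auto
          also have "\<dots> = (\<Oplus>j\<in>{..<m}. \<ominus> (c j \<otimes> (\<Oplus>i\<in>{..<n}. S j i \<otimes> a i)))"
          proof (intro fs_cong)
            fix j assume j: "j < m"
            have "c j \<otimes> \<ominus> t j \<otimes> u = \<ominus> (c j \<otimes> (t j \<otimes> u))"
              using c[OF j] tc[OF j] u by algebra
            then show "c j \<otimes> \<ominus> t j \<otimes> u = \<ominus> (c j \<otimes> (\<Oplus>i\<in>{..<n}. S j i \<otimes> a i))"
              using tS[OF j] by simp
            show "\<ominus> (c j \<otimes> (\<Oplus>i\<in>{..<n}. S j i \<otimes> a i)) \<in> carrier R"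
              using c[OF j] S j a by (auto intro!: fs_closed)
          qed
          also have "\<dots> = \<ominus> (\<Oplus>j\<in>{..<m}. c j \<otimes> (\<Oplus>i\<in>{..<n}. S j i \<otimes> a i))"
            using c S a by (intro fs_neg[symmetric]) (auto intro!: fs_closed)
          also have "(\<Oplus>j\<in>{..<m}. c j \<otimes> (\<Oplus>i\<in>{..<n}. S j i \<otimes> a i)) = (\<Oplus>i\<in>{..<n}. Y i \<otimes> a i)"
            unfolding Y_def using c S a by (intro lin_comp) auto
          finally show ?thesis .
        qed
        have E2: "(\<Oplus>k\<in>{..<n}. (\<ominus> w k) \<otimes> a k) \<otimes> u = (\<Oplus>i\<in>{..<n}. Y i \<otimes> a i) \<ominus> (\<Oplus>i\<in>{..<n}. r (Suc i) \<otimes> a i)"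
        proof -
          have "(\<Oplus>k\<in>{..<n}. (\<ominus> w k) \<otimes> a k) \<otimes> u = (\<Oplus>k\<in>{..<n}. (\<ominus> w k) \<otimes> a k \<otimes> u)"
            using wc a u by (intro fs_mult_r) auto
          also have "\<dots> = (\<Oplus>k\<in>{..<n}. Y k \<otimes> a k \<ominus> r (Suc k) \<otimes> a k)"
          proof (intro fs_cong)
            fix k assume k: "k < n"
            have "(\<ominus> w k) \<otimes> a k \<otimes> u = \<ominus> ((w k \<otimes> u) \<otimes> a k)" proof -
              have "a k \<in> carrier R" using k a by auto
              then show ?thesis using wc[OF k] u by algebra
            qed
            also have "\<dots> = \<ominus> ((r (Suc k) \<ominus> Y k) \<otimes> a k)" using wY[OF k] by simp
            also have "\<dots> = Y k \<otimes> a k \<ominus> r (Suc k) \<otimes> a k" proof -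
              have "r (Suc k) \<in> carrier R" "a k \<in> carrier R" using rc k a by auto
              then show ?thesis using Yc[OF k] by algebra
            qed
            finally show "(\<ominus> w k) \<otimes> a k \<otimes> u = Y k \<otimes> a k \<ominus> r (Suc k) \<otimes> a k" .
          next
            fix k assume k: "k < n"
            show "Y k \<otimes> a k \<ominus> r (Suc k) \<otimes> a k \<in> carrier R" using Yc[OF k] rc[of "Suc k"] k a by auto
          qed
          also have "\<dots> = (\<Oplus>i\<in>{..<n}. Y i \<otimes> a i) \<ominus> (\<Oplus>i\<in>{..<n}. r (Suc i) \<otimes> a i)"
            using Yc rc a by (intro fs_diff[symmetric]) auto
          finally show ?thesis .
        qed
        have Xc: "X \<in> carrier R" unfolding X_def using c tc wc a by (auto intro!: fs_closed)
        have "X \<otimes> u = r 0 \<otimes> u"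
        proof -
          have "X \<otimes> u = (\<Oplus>j\<in>{..<m}. c j \<otimes> \<ominus> t j) \<otimes> u \<oplus> (\<Oplus>k\<in>{..<n}. (\<ominus> w k) \<otimes> a k) \<otimes> u"
            unfolding X_def using c tc wc a u by (intro l_distr) (auto intro!: fs_closed)
          also have "\<dots> = \<ominus> (\<Oplus>i\<in>{..<n}. r (Suc i) \<otimes> a i)"
          proof -
            have aux: "\<And>x y. x \<in> carrier R \<Longrightarrow> y \<in> carrier R \<Longrightarrow> \<ominus> x \<oplus> (x \<ominus> y) = \<ominus> y"
              by algebra
            show ?thesis unfolding E1 E2 using aux[OF YA rhoc] .
          qed
          also have "\<dots> = r 0 \<otimes> u" using rho_eq r0c u by (simp add: l_minus)
          finally show ?thesis .
        qed
        then have "X = r 0" using m_rcancel[OF u(2) u(1) Xc r0c] by simp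
        then show ?thesis using sX 0 by simp
      qed
    qed
  qed
qed

end

lemma fpi_iff:
  assumes "cring R"
  shows "finitely_presented_ideal R I \<longleftrightarrow>
    (\<exists>(n::nat) a. (\<forall>i<n. a i \<in> carrier R) \<and> I = Idl\<^bsub>R\<^esub> (a ` {..<n}) \<and> cring.fin_syz R n a)"
  unfolding finitely_presented_ideal_def cring.fin_syz_def[OF assms] by (rule refl)

context domain begin

lemma Idl_insert:
  assumes "S \<subseteq> carrier R" "u \<in> Idl S"
  shows "Idl (insert u S) = Idl S"
proof
  have "ideal (Idl S) R" using assms(1) by (rule genideal_ideal)
  moreover have "insert u S \<subseteq> Idl S" using assms(2) genideal_self[OF assms(1)] by blast
  ultimately show "Idl (insert u S) \<subseteq> Idl S" by (rule genideal_minimal)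
next
  have uc: "u \<in> carrier R" using ideal.Icarr[OF genideal_ideal[OF assms(1)] assms(2)] .
  have ic: "insert u S \<subseteq> carrier R" using assms(1) uc by blast
  have "ideal (Idl (insert u S)) R" using ic by (rule genideal_ideal)
  moreover have "S \<subseteq> Idl (insert u S)" using genideal_self[OF ic] by blast
  ultimately show "Idl S \<subseteq> Idl (insert u S)" by (rule genideal_minimal)
qed

lemma coherent_main:
  assumes H: "\<forall>u\<in>carrier R. u \<noteq> \<zero> \<and> u \<notin> Units R \<longrightarrow> coherent_ring (R Quot (PIdl u))"
  shows "coherent_ring R"
  unfolding coherent_ring_def
proof (intro conjI allI impI, rule is_cring, elim conjE)
  fix I assume I: "ideal I R" and fg: "finitely_generated_ideal R I"
  interpret I: ideal I R by (rule I)
  obtain S where S: "finite S" "S \<subseteq> carrier R" "I = Idl S"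
    using fg unfolding finitely_generated_ideal_def by blast
  obtain n :: nat and a where Sa: "S = a ` {i. i < n}"
    using finite_imp_nat_seg_image_inj_on[OF S(1)] by blast
  have Sa': "S = a ` {..<n}" using Sa by (simp add: lessThan_def)
  have a: "\<forall>i<n. a i \<in> carrier R" using S(2) Sa' by auto
  show "finitely_presented_ideal R I"
  proof (cases "\<forall>x\<in>I. x = \<zero>")
    case True
    have I0: "I = {\<zero>}" using True I.Icarr additive_subgroup.zero_closed[OF ideal.axioms(1)[OF I]] by auto
    have "Idl ({}::'a set) \<subseteq> {\<zero>}" by (rule genideal_minimal[OF zeroideal]) auto
    moreover have "\<zero> \<in> Idl ({}::'a set)"
      using additive_subgroup.zero_closed[OF ideal.axioms(1)[OF genideal_ideal[of "{}"]]] by simp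
    ultimately have "Idl ({}::'a set) = {\<zero>}" by auto
    then have "I = Idl ((\<lambda>i. \<zero>) ` {..<0::nat})" using I0 by simp
    moreover have "fin_syz 0 (\<lambda>i. \<zero>)" unfolding fin_syz_def
      by (intro exI[of _ "0::nat"]) auto
    ultimately show ?thesis unfolding fpi_iff[OF is_cring] by (intro exI[of _ "0::nat"] exI[of _ "\<lambda>i. \<zero>"]) auto
  next
    case False
    show ?thesis
    proof (cases "\<exists>x\<in>I. x \<in> Units R")
      case True
      then obtain x where x: "x \<in> I" "x \<in> Units R" by blast
      have "x \<otimes> inv x \<in> I" using I.I_r_closed[OF x(1) Units_inv_closed[OF x(2)]] .
      then have "\<one> \<in> I" using Units_r_inv[OF x(2)] by simp
      then have Ic: "I = carrier R" by (rule I.one_imp_carrier)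
      have "(\<lambda>i. \<one>) ` {..<1::nat} = {\<one>}" by auto
      then have "I = Idl ((\<lambda>i. \<one>) ` {..<1::nat})" using Ic genideal_one by simp
      moreover have "fin_syz 1 (\<lambda>i. \<one>)" unfolding fin_syz_def
      proof (intro exI[of _ "0::nat"] exI[of _ "\<lambda>j i. \<zero>"] conjI allI impI)
        fix r assume r: "syzygy R 1 (\<lambda>i. \<one>) r"
        then have r0: "r 0 \<in> carrier R" "(\<Oplus>i\<in>{..<1::nat}. r i \<otimes> \<one>) = \<zero>" unfolding syzygy_def by auto
        have e: "{..<1::nat} = insert 0 {}" by auto
        have "(\<Oplus>i\<in>{..<1::nat}. r i \<otimes> \<one>) = r 0 \<otimes> \<one> \<oplus> (\<Oplus>i\<in>{}. r i \<otimes> \<one>)"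
          unfolding e using r0 by (intro finsum_insert) auto
        then have "r 0 = \<zero>" using r0 by simp
        then show "\<exists>c. (\<forall>j<0. c j \<in> carrier R) \<and> (\<forall>i<1. r i = (\<Oplus>j\<in>{..<0::nat}. c j \<otimes> \<zero>))"
          by auto
      qed auto
      ultimately show ?thesis unfolding fpi_iff[OF is_cring] by (intro exI[of _ "1::nat"] exI[of _ "\<lambda>i. \<one>"]) auto
    next
      case noU: False
      from False obtain u where u: "u \<in> I" "u \<noteq> \<zero>" by blast
      have uc: "u \<in> carrier R" using u I.Icarr by blast
      have uU: "u \<notin> Units R" using noU u by blast
      define J where "J = PIdl u"
      have Jid: "ideal J R" unfolding J_def using uc by (rule cgenideal_ideal)
      interpret J: ideal J R by (rule Jid)
      interpret Q: cring "R Quot J" by (rule J.quotient_is_cring[OF is_cring])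
      interpret h: ring_hom_cring R "R Quot J" "(+>) J" by (rule J.rcos_ring_hom_cring[OF is_cring])
      have coh: "coherent_ring (R Quot J)" using H uc u uU unfolding J_def by blast
      define ab where "ab = (\<lambda>i. J +> a i)"
      have abc: "\<forall>i<n. ab i \<in> carrier (R Quot J)" using a by (simp add: ab_def)
      have Jb: "ideal (Idl\<^bsub>R Quot J\<^esub> (ab ` {..<n})) (R Quot J)"
        using abc by (intro Q.genideal_ideal) auto
      have "finitely_generated_ideal (R Quot J) (Idl\<^bsub>R Quot J\<^esub> (ab ` {..<n}))"
        unfolding finitely_generated_ideal_def using abc by (intro exI[of _ "ab ` {..<n}"]) auto
      then have "finitely_presented_ideal (R Quot J) (Idl\<^bsub>R Quot J\<^esub> (ab ` {..<n}))"
        using coh Jb unfolding coherent_ring_def by blast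
      then obtain n2 :: nat and b2 where b2: "\<forall>i<n2. b2 i \<in> carrier (R Quot J)"
        and b2I: "Idl\<^bsub>R Quot J\<^esub> (ab ` {..<n}) = Idl\<^bsub>R Quot J\<^esub> (b2 ` {..<n2})"
        and b2f: "Q.fin_syz n2 b2"
        unfolding fpi_iff[OF Q.is_cring] by blast
      have "Q.fin_syz n ab" using Q.transfer[OF b2 abc b2I[symmetric] b2f] .
      then have "fin_syz (Suc n) (\<lambda>i. if i = 0 then u else a (i - 1))"
        using key_case[OF a uc u(2)] unfolding ab_def J_def by blast
      moreover have "(\<lambda>i. if i = 0 then u else a (i - 1)) ` {..<Suc n} = insert u (a ` {..<n})"
        unfolding lessThan_Suc_eq_insert_0 image_insert image_image by simp
      moreover have "Idl (insert u (a ` {..<n})) = I"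
        using Idl_insert[of "a ` {..<n}" u] S(3) Sa' a u(1) by auto
      moreover have "\<forall>i<Suc n. (if i = 0 then u else a (i - 1)) \<in> carrier R" using a uc by auto
      ultimately show ?thesis unfolding fpi_iff[OF is_cring]
        by (intro exI[of _ "Suc n"] exI[of _ "\<lambda>i. if i = 0 then u else a (i - 1)"]) auto
    qed
  qed
qed

end

theorem lemma4p4:
  fixes R :: "('a, 'b) ring_scheme"
  assumes "domain R"
    and "\<forall>u\<in>carrier R. u \<noteq> \<zero>\<^bsub>R\<^esub> \<and> u \<notin> Units R \<longrightarrow> coherent_ring (R Quot (PIdl\<^bsub>R\<^esub> u))"
  shows "coherent_ring R"
  using domain.coherent_main[OF assms(1) assms(2)] .

end
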